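(* Let $\varphi:\mathbb{R}\to[0,1]$ be defined by $\varphi(s)=0$ if $s<0$, $\varphi(s)=s$ if $s\in[0,1]$, $\varphi(s)=1$ if $s>1$. Let $$A_0=\begin{pmatrix}-0.1 & 0.5\\ -2 & 0\end{pmatrix},\qquad A_1=\begin{pmatrix}0 & 2\\ -0.5 & -0.1\end{pmatrix},$$ and $g(x,u)=(1+|x|^2)\big(\varphi(u)A_1+(1-\varphi(u))A_0\big)x$ for $x\in\mathbb{R}^2$, $u\in\mathbb{R}$. For $c>0$ consider the time-delay system $$\dot x(t)=c\,\varphi(z_2(t-2))\,g\big(x(t),z_1(t-1)\big)+c\big(1-\varphi(z_2(t-2))\big)A_0x(t),\qquad \dot z_1(t)=-z_1(t),\qquad \dot z_2(t)=-z_2(t),$$ with $x(t)\in\mathbb{R}^2$, $z_1(t),z_2(t)\in\mathbb{R}$ and initial data $x_0\in C([-2,0],\mathbb{R})^2$, $z_{10},z_{20}\in C([-2,0],\mathbb{R})$ prescribed on $[-2,0]$. Then there exists a constant $c>0$ such that, for every $M>0$, there exist $z_{10}\in C([-2,0],\mathbb{R})$ with $\|z_{10}\|\le1$ and $z_{10}(0)=0$, and $x_0\in C([-2,0],\mathbb{R})^2$ with $\|x_0\|\le1$, such that for every $z_{20}\in C([-2,0],\mathbb{R})$ satisfying $z_{20}(t)=1$ for all $t\in[-2,-1]$, the corresponding solution satisfies $|x(1)|\ge 2M$.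
   Context: $|\cdot|$ denotes the Euclidean norm and, for a continuous function $\psi$ on $[-2,0]$, $\|\psi\|=\sup_{\tau\in[-2,0]}|\psi(\tau)|$. *)

theory Defs
  imports "HOL-Analysis.Analysis"
begin

definition sat :: "real \<Rightarrow> real" where
  "sat s = (if s < 0 then 0 else if s \<le> 1 then s else 1)"

definition A0 :: "real^2^2" where
  "A0 = vector [vector [-1/10, 1/2], vector [-2, 0]]"

definition A1 :: "real^2^2" where
  "A1 = vector [vector [0, 2], vector [-1/2, -1/10]]"

definition g :: "real^2 \<Rightarrow> real \<Rightarrow> real^2" where
  "g x u = (1 + (norm x)^2) *\<^sub>R ((sat u *\<^sub>R A1 + (1 - sat u) *\<^sub>R A0) *v x)"

text \<open>(x, z1, z2) is a solution on [-2,1] of the delay system with parameter c and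
  initial data x0, z10, z20 on [-2,0]; derivatives on [0,1] are taken within [0,1]
  (one-sided at the endpoints).\<close>
definition is_solution ::
  "real \<Rightarrow> (real \<Rightarrow> real^2) \<Rightarrow> (real \<Rightarrow> real) \<Rightarrow> (real \<Rightarrow> real)
   \<Rightarrow> (real \<Rightarrow> real^2) \<Rightarrow> (real \<Rightarrow> real) \<Rightarrow> (real \<Rightarrow> real) \<Rightarrow> bool" where
  "is_solution c x0 z10 z20 x z1 z2 \<longleftrightarrow>
     continuous_on {-2..1} x \<and> continuous_on {-2..1} z1 \<and> continuous_on {-2..1} z2 \<and>
     (\<forall>t\<in>{-2..0}. x t = x0 t \<and> z1 t = z10 t \<and> z2 t = z20 t) \<and>
     (\<forall>t\<in>{0..1}.
        (x has_vector_derivative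
           ((c * sat (z2 (t - 2))) *\<^sub>R g (x t) (z1 (t - 1))
            + (c * (1 - sat (z2 (t - 2)))) *\<^sub>R (A0 *v x t))) (at t within {0..1}) \<and>
        (z1 has_vector_derivative (- z1 t)) (at t within {0..1}) \<and>
        (z2 has_vector_derivative (- z2 t)) (at t within {0..1}))"

end

theory Submission
  imports Defs
begin


definition lam :: "real \<Rightarrow> real" where "lam p = sat (1/2 - 100 * sin (2*p))"
definition bq :: "real \<Rightarrow> real \<Rightarrow> real" where
 "bq p l = (-1/10*(cos p)^2 + 3/2* cos p* sin p) + l*(1/10*(cos p)^2 - 3* cos p* sin p - 1/10*(sin p)^2)"
definition aq :: "real \<Rightarrow> real \<Rightarrow> real" where
 "aq p l = (-1/10* cos p* sin p - 1/2*(sin p)^2 - 2*(cos p)^2) + l*(1/5* cos p* sin p - 3/2*(sin p)^2 + 3/2*(cos p)^2)"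
definition hh :: "real \<Rightarrow> real" where "hh p = bq p (lam p) / (- aq p (lam p))"

lemma sat_range: "0 \<le> sat s" "sat s \<le> 1" by (auto simp: sat_def)
lemma sat_id: "0 \<le> s \<Longrightarrow> s \<le> 1 \<Longrightarrow> sat s = s" by (auto simp: sat_def)
lemma sat_eq: "sat = (\<lambda>s. max 0 (min 1 s))" by (auto simp: sat_def fun_eq_iff)
lemma continuous_on_sat: "continuous_on S f \<Longrightarrow> continuous_on S (\<lambda>x. sat (f x))"
  unfolding sat_eq by (intro continuous_intros)
lemma lam_range: "0 \<le> lam p" "lam p \<le> 1" by (auto simp: lam_def sat_range)

lemma quad_nonneg:
  fixes x y :: real
  assumes "0 < a" "b^2 \<le> 4*a*c"
  shows "0 \<le> a*x^2 + b*x*y + c*y^2"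
proof -
  have "4*a*(a*x^2 + b*x*y + c*y^2) = (2*a*x + b*y)^2 + (4*a*c - b^2)*y^2"
    by (simp add: algebra_simps power2_eq_square)
  also have "\<dots> \<ge> 0" using assms by simp
  finally show ?thesis using assms
    by (simp add: zero_le_mult_iff)
qed

lemma conv_le:
  fixes l X Y m :: real
  assumes "0 \<le> l" "l \<le> 1" "X \<le> m" "Y \<le> m"
  shows "(1-l)*X + l*Y \<le> m"
proof -
  have "(1-l)*X \<le> (1-l)*m" using assms by (intro mult_left_mono) auto
  moreover have "l*Y \<le> l*m" using assms by (intro mult_left_mono) auto
  ultimately show ?thesis by (simp add: algebra_simps)
qed

lemma conv_ge:
  fixes l X Y m :: real
  assumes "0 \<le> l" "l \<le> 1" "m \<le> X" "m \<le> Y"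
  shows "m \<le> (1-l)*X + l*Y"
  using conv_le[of l "-X" "-m" "-Y"] assms by (simp add: algebra_simps)

lemma aq_bounds:
  assumes "0 \<le> l" "l \<le> 1"
  shows "aq p l \<le> -2/5" "-21/10 \<le> aq p l"
proof -
  let ?C = "cos p" and ?S = "sin p"
  have cs: "?C^2 + ?S^2 = 1" by simp
  have q1: "0 \<le> 8/5*?C^2 + 1/10*?C*?S + 1/10*?S^2" by (rule quad_nonneg) (simp_all add: power2_eq_square)
  have q2: "0 \<le> 1/10*?C^2 + (-1/10)*?C*?S + 8/5*?S^2" by (rule quad_nonneg) (simp_all add: power2_eq_square)
  have a0: "-1/10*?C * ?S - 1/2*?S^2 - 2*?C^2 \<le> -2/5"
    using q1 cs by linarith
  have a1: "1/10*?C * ?S - 2*?S^2 - 1/2*?C^2 \<le> -2/5"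
    using q2 cs by linarith
  have a0': "-1/10*?C * ?S - 1/2*?S^2 - 2*?C^2 \<ge> -21/10"
    using q2 cs by linarith
  have a1': "1/10*?C * ?S - 2*?S^2 - 1/2*?C^2 \<ge> -21/10"
    using q1 cs by linarith
  have e: "aq p l = (1-l)*(-1/10*?C*?S - 1/2*?S^2 - 2*?C^2) + l*(1/10*?C*?S - 2*?S^2 - 1/2*?C^2)"
    by (simp add: aq_def field_simps)
  show "aq p l \<le> -2/5" unfolding e
    using conv_le[OF assms a0 a1] .
  show "-21/10 \<le> aq p l" unfolding e
    using conv_ge[OF assms a0' a1'] .
qed

lemma hh_ge:
  assumes "0 \<le> bq p (lam p) + m * aq p (lam p)"
  shows "m \<le> hh p"
proof -
  have a: "aq p (lam p) \<le> -2/5" using aq_bounds lam_range by blast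
  have "m * (- aq p (lam p)) \<le> bq p (lam p)" using assms by (simp add: algebra_simps)
  moreover have "0 < - aq p (lam p)" using a by simp
  ultimately show ?thesis unfolding hh_def by (subst pos_le_divide_eq) auto
qed

lemma hh_ge_m1: "-1 \<le> hh p"
proof (rule hh_ge)
  let ?C = "cos p" and ?S = "sin p" and ?l = "lam p"
  have q1: "0 \<le> 19/10*?C^2 + 8/5*?C*?S + 1/2*?S^2" by (rule quad_nonneg) (simp_all add: power2_eq_square)
  have q2: "0 \<le> 1/2*?C^2 + (-8/5)*?C*?S + 19/10*?S^2" by (rule quad_nonneg) (simp_all add: power2_eq_square)
  have e: "bq p ?l + (-1) * aq p ?l = (1-?l)*(19/10*?C^2 + 8/5*?C*?S + 1/2*?S^2) + ?l*(1/2*?C^2 + (-8/5)*?C*?S + 19/10*?S^2)"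
    by (simp add: aq_def bq_def field_simps)
  show "0 \<le> bq p ?l + (-1) * aq p ?l" unfolding e using conv_ge[OF lam_range q1 q2] .
qed

lemma sin_half_lb:
  assumes "0 \<le> x" "x \<le> pi/3"
  shows "x/2 \<le> sin x"
proof -
  have "(\<lambda>x. sin x - x/2) 0 \<le> (\<lambda>x. sin x - x/2) x"
  proof (rule DERIV_nonneg_imp_nondecreasing[OF assms(1)])
    fix y assume y: "0 \<le> y" "y \<le> x"
    have "cos (pi/3) \<le> cos y" using y assms by (intro cos_monotone_0_pi_le) auto
    then have "0 \<le> cos y - 1/2" by (simp add: cos_60)
    moreover have "DERIV (\<lambda>x. sin x - x/2) y :> cos y - 1/2"
      by (auto intro!: derivative_eq_intros)
    ultimately show "\<exists>d. DERIV (\<lambda>x. sin x - x/2) y :> d \<and> d \<ge> 0" by blast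
  qed
  then show ?thesis by simp
qed

lemma sin_lb_mid:
  assumes "1/50 \<le> x" "x \<le> pi - 1/50"
  shows "1/100 \<le> sin x"
proof -
  have pi3: "pi > 3" by (rule pi_gt3)
  have s1: "1/100 \<le> sin (1/50::real)" using sin_half_lb[of "1/50"] pi3 by simp
  show ?thesis
  proof (cases "x \<le> pi/2")
    case True
    then have "sin (1/50) \<le> sin x" using assms pi3 by (intro sin_monotone_2pi_le) auto
    with s1 show ?thesis by simp
  next
    case False
    then have "sin (1/50) \<le> sin (pi - x)" using assms pi3 by (intro sin_monotone_2pi_le) auto
    with s1 show ?thesis by simp
  qed
qed

lemma lam_zero:
  assumes "1/100 \<le> p" "p \<le> pi/2 - 1/100"
  shows "lam p = 0"
proof -
  have "1/100 \<le> sin (2*p)" using assms by (intro sin_lb_mid) auto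
  then show ?thesis by (simp add: lam_def sat_def)
qed

lemma lam_one:
  assumes "pi/2 + 1/100 \<le> p" "p \<le> pi - 1/100"
  shows "lam p = 1"
proof -
  have "1/100 \<le> sin (2*p - pi)" using assms by (intro sin_lb_mid) auto
  then have "sin (2*p) \<le> -1/100" by simp
  then show ?thesis by (simp add: lam_def sat_def)
qed

lemma hh_A0_m:
  assumes "lam p = 0" "0 \<le> p" "p \<le> pi/2"
  shows "-1/20 \<le> hh p"
proof (rule hh_ge)
  have "0 \<le> cos p" using assms by (intro cos_ge_zero) auto
  moreover have "0 \<le> sin p" using assms by (intro sin_ge_zero) auto
  ultimately have "0 \<le> 1505/1000 * (cos p * sin p) + 1/40 * (sin p)^2" by simp
  moreover have "bq p (lam p) + (-1/20) * aq p (lam p) = 1505/1000 * (cos p * sin p) + 1/40 * (sin p)^2"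
    using assms(1) by (simp add: bq_def aq_def field_simps power2_eq_square)
  ultimately show "0 \<le> bq p (lam p) + (-1/20) * aq p (lam p)" by simp
qed

lemma hh_A1_m:
  assumes "lam p = 1" "pi/2 \<le> p" "p \<le> pi"
  shows "-1/20 \<le> hh p"
proof (rule hh_ge)
  have "cos p \<le> 0" using cos_monotone_0_pi_le[of "pi/2" p] assms by simp
  moreover have "0 \<le> sin p" using assms by (intro sin_ge_zero) auto
  ultimately have "0 \<le> - cos p * sin p" by (simp add: mult_nonpos_nonneg)
  then have "0 \<le> 1505/1000 * (- cos p * sin p) + 1/40 * (cos p)^2" by (intro add_nonneg_nonneg) auto
  moreover have "bq p (lam p) + (-1/20) * aq p (lam p) = 1505/1000 * (- cos p * sin p) + 1/40 * (cos p)^2"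
    using assms(1) by (simp add: bq_def aq_def field_simps power2_eq_square)
  ultimately show "0 \<le> bq p (lam p) + (-1/20) * aq p (lam p)" by simp
qed

lemma quad_arc:
  fixes X Y :: real
  assumes "0 \<le> X" "57/100 * X \<le> Y" "Y \<le> 174/100 * X"
  shows "0 \<le> -7/10 * X^2 + 147/100 * X * Y - 15/100 * Y^2"
proof -
  have e: "-7/10 * X^2 + 147/100 * X * Y - 15/100 * Y^2
     = 15/100 * ((Y - 57/100*X) * (174/100*X - Y)) + X * (11235/10000 * Y - 55123/100000 * X)"
    by (simp add: field_simps power2_eq_square)
  have "0 \<le> (Y - 57/100*X) * (174/100*X - Y)" using assms by simp
  moreover have "0 \<le> X * (11235/10000 * Y - 55123/100000 * X)" using assms by simp
  ultimately show ?thesis unfolding e by simp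
qed

lemma sqrt3_ub: "sqrt 3 \<le> 1733/1000"
proof -
  have "sqrt 3 \<le> sqrt ((1733/1000)^2)" by (subst real_sqrt_le_iff) (simp add: power2_eq_square)
  then show ?thesis by simp
qed

lemma arc_bounds:
  assumes "pi/6 \<le> q" "q \<le> pi/3"
  shows "0 \<le> cos q" "0 \<le> sin q" "57/100 * cos q \<le> sin q" "sin q \<le> 174/100 * cos q"
        "57/100 * sin q \<le> cos q" "cos q \<le> 174/100 * sin q"
proof -
  have pi3: "pi > 3" by (rule pi_gt3)
  have s1: "1/2 \<le> sin q" using sin_monotone_2pi_le[of "pi/6" q] assms pi3 by (simp add: sin_30)
  have s2: "sin q \<le> sqrt 3/2" using sin_monotone_2pi_le[of q "pi/3"] assms pi3 by (simp add: sin_60)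
  have c1: "1/2 \<le> cos q" using cos_monotone_0_pi_le[of q "pi/3"] assms pi3 by (simp add: cos_60)
  have c2: "cos q \<le> sqrt 3/2" using cos_monotone_0_pi_le[of "pi/6" q] assms pi3 by (simp add: cos_30)
  show "0 \<le> cos q" "0 \<le> sin q" using s1 c1 by auto
  show "57/100 * cos q \<le> sin q" "sin q \<le> 174/100 * cos q"
        "57/100 * sin q \<le> cos q" "cos q \<le> 174/100 * sin q"
    using s1 s2 c1 c2 sqrt3_ub by auto
qed

lemma hh_A0_big:
  assumes "pi/6 \<le> p" "p \<le> pi/3"
  shows "3/10 \<le> hh p"
proof (rule hh_ge)
  have pi3: "pi > 3" by (rule pi_gt3)
  have l: "lam p = 0" using assms pi3 by (intro lam_zero) auto
  note ab = arc_bounds[OF assms]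
  have "bq p (lam p) + (3/10) * aq p (lam p) = -7/10 * (cos p)^2 + 147/100 * cos p * sin p - 15/100 * (sin p)^2"
    using l by (simp add: bq_def aq_def field_simps power2_eq_square)
  then show "0 \<le> bq p (lam p) + (3/10) * aq p (lam p)" using quad_arc[OF ab(1) ab(3) ab(4)] by simp
qed

lemma hh_A1_big:
  assumes "2*pi/3 \<le> p" "p \<le> 5*pi/6"
  shows "3/10 \<le> hh p"
proof (rule hh_ge)
  have pi3: "pi > 3" by (rule pi_gt3)
  have l: "lam p = 1" using assms pi3 by (intro lam_one) auto
  have q: "pi/6 \<le> pi - p" "pi - p \<le> pi/3" using assms by auto
  note ab = arc_bounds[OF q]
  have cs: "cos (pi - p) = - cos p" "sin (pi - p) = sin p" by simp_all
  have "bq p (lam p) + (3/10) * aq p (lam p) = -7/10 * (sin p)^2 + 147/100 * sin p * (- cos p) - 15/100 * (- cos p)^2"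
    using l by (simp add: bq_def aq_def field_simps power2_eq_square)
  then show "0 \<le> bq p (lam p) + (3/10) * aq p (lam p)" using quad_arc[of "sin p" "- cos p"] ab cs by simp
qed

lemma cont_lam: "continuous_on S lam"
  unfolding lam_def by (intro continuous_on_sat continuous_intros)

lemma aq_lam_neg: "aq p (lam p) < 0"
  using aq_bounds(1)[of "lam p" p] lam_range[of p] by linarith

lemma cont_aq: "continuous_on S (\<lambda>p. aq p (lam p))"
  unfolding aq_def by (intro continuous_intros cont_lam)
lemma cont_bq: "continuous_on S (\<lambda>p. bq p (lam p))"
  unfolding bq_def by (intro continuous_intros cont_lam)

lemma cont_hh: "continuous_on S hh"
proof -
  have "continuous_on S (\<lambda>p. bq p (lam p) / (- aq p (lam p)))"
    using aq_lam_neg by (intro continuous_intros cont_aq cont_bq) (auto simp: less_le)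
  then show ?thesis by (simp add: hh_def[abs_def])
qed

lemma lam_per: "lam (p + pi) = lam p"
proof -
  have "2*(p+pi) = 2*p + 2*pi" by simp
  then show ?thesis by (simp add: lam_def)
qed

lemma hh_per: "hh (p + pi) = hh p"
  by (simp add: hh_def lam_per bq_def aq_def)

definition FF :: "real \<Rightarrow> real" where "FF p = integral {-1..p} hh"

lemma FF_deriv: "-1 < p \<Longrightarrow> (FF has_real_derivative hh p) (at p)"
proof -
  assume p: "-1 < p"
  have "((\<lambda>x. integral {-1..x} hh) has_real_derivative hh p) (at p within {-1..p+1})"
    using p by (intro integral_has_real_derivative cont_hh) auto
  moreover have "at p within {-1..p+1} = at p" using p by (intro at_within_Icc_at) auto
  ultimately show ?thesis by (simp add: FF_def[abs_def])
qed

lemma lb_deriv: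
  fixes f f' :: "real \<Rightarrow> real"
  assumes "a \<le> b" "\<And>x. a \<le> x \<Longrightarrow> x \<le> b \<Longrightarrow> (f has_real_derivative f' x) (at x)"
    "\<And>x. a \<le> x \<Longrightarrow> x \<le> b \<Longrightarrow> m \<le> f' x"
  shows "m * (b - a) \<le> f b - f a"
proof -
  have "(\<lambda>x. f x - m * x) a \<le> (\<lambda>x. f x - m * x) b"
  proof (rule DERIV_nonneg_imp_nondecreasing[OF assms(1)])
    fix x assume x: "a \<le> x" "x \<le> b"
    have "((\<lambda>x. f x - m * x) has_real_derivative f' x - m) (at x)"
      using assms(2)[OF x] by (auto intro!: derivative_eq_intros)
    then show "\<exists>y. ((\<lambda>x. f x - m * x) has_real_derivative y) (at x) \<and> 0 \<le> y"
      using assms(3)[OF x] by force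
  qed
  then show ?thesis by (simp add: algebra_simps)
qed

lemma ub_deriv:
  fixes f f' :: "real \<Rightarrow> real"
  assumes "a \<le> b" "\<And>x. a \<le> x \<Longrightarrow> x \<le> b \<Longrightarrow> (f has_real_derivative f' x) (at x)"
    "\<And>x. a \<le> x \<Longrightarrow> x \<le> b \<Longrightarrow> f' x \<le> m"
  shows "f b - f a \<le> m * (b - a)"
proof -
  have "(-m) * (b - a) \<le> (\<lambda>x. - f x) b - (\<lambda>x. - f x) a"
    by (rule lb_deriv[OF assms(1), of _ "\<lambda>x. - f' x"]) (auto intro!: derivative_eq_intros assms(2,3))
  then show ?thesis by (simp add: algebra_simps)
qed

lemma FF_lb:
  assumes "0 \<le> a" "a \<le> b" "\<And>x. a \<le> x \<Longrightarrow> x \<le> b \<Longrightarrow> m \<le> hh x"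
  shows "m * (b - a) \<le> FF b - FF a"
  using assms by (intro lb_deriv[of a b FF hh]) (auto intro!: FF_deriv)

lemma hh_A0_m': "1/100 \<le> p \<Longrightarrow> p \<le> pi/2 - 1/100 \<Longrightarrow> -1/20 \<le> hh p"
  by (rule hh_A0_m) (auto intro: lam_zero)
lemma hh_A1_m': "pi/2 + 1/100 \<le> p \<Longrightarrow> p \<le> pi - 1/100 \<Longrightarrow> -1/20 \<le> hh p"
  by (rule hh_A1_m) (auto intro: lam_one)

lemma G_pos: "0 < FF pi - FF 0"
proof -
  have pi3: "pi > 3" by (rule pi_gt3)
  have pi4: "pi < 4" by (rule pi_less_4)
  define d :: real where "d = 1/100"
  have i1: "(-1) * (d - 0) \<le> FF d - FF 0" using hh_ge_m1 by (intro FF_lb) (auto simp: d_def)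
  have i2: "(-1/20) * (pi/6 - d) \<le> FF (pi/6) - FF d" using pi3
    by (intro FF_lb hh_A0_m') (auto simp: d_def)
  have i3: "(3/10) * (pi/3 - pi/6) \<le> FF (pi/3) - FF (pi/6)" using pi3
    by (intro FF_lb hh_A0_big) (auto simp: d_def)
  have i4: "(-1/20) * ((pi/2 - d) - pi/3) \<le> FF (pi/2 - d) - FF (pi/3)" using pi3
    by (intro FF_lb hh_A0_m') (auto simp: d_def)
  have i5: "(-1) * ((pi/2 + d) - (pi/2 - d)) \<le> FF (pi/2 + d) - FF (pi/2 - d)" using pi3 hh_ge_m1
    by (intro FF_lb) (auto simp: d_def)
  have i6: "(-1/20) * (2*pi/3 - (pi/2 + d)) \<le> FF (2*pi/3) - FF (pi/2 + d)" using pi3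
    by (intro FF_lb hh_A1_m') (auto simp: d_def)
  have i7: "(3/10) * (5*pi/6 - 2*pi/3) \<le> FF (5*pi/6) - FF (2*pi/3)" using pi3
    by (intro FF_lb hh_A1_big) (auto simp: d_def)
  have i8: "(-1/20) * ((pi - d) - 5*pi/6) \<le> FF (pi - d) - FF (5*pi/6)" using pi3
    by (intro FF_lb hh_A1_m') (auto simp: d_def)
  have i9: "(-1) * (pi - (pi - d)) \<le> FF pi - FF (pi - d)" using pi3 hh_ge_m1
    by (intro FF_lb) (auto simp: d_def)
  show ?thesis using i1 i2 i3 i4 i5 i6 i7 i8 i9 pi3 by (simp add: d_def algebra_simps)
qed

lemma FF_per:
  assumes "0 \<le> p"
  shows "FF (p + pi) - FF p = FF pi - FF 0"
proof -
  let ?f = "\<lambda>x. FF (x + pi) - FF x"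
  have d: "(?f has_real_derivative 0) (at x)" if "0 \<le> x" for x
  proof -
    have "((\<lambda>x. FF (x + pi)) has_real_derivative hh (x + pi)) (at x)"
      using FF_deriv[of "x + pi"] that pi_gt_zero DERIV_shift[of FF "hh (x+pi)" x pi] by simp
    then have "(?f has_real_derivative hh (x + pi) - hh x) (at x)"
      using FF_deriv[of x] that by (intro derivative_intros) auto
    then show ?thesis by (simp add: hh_per)
  qed
  have "?f p - ?f 0 \<le> 0 * (p - 0)" by (rule ub_deriv[OF assms, of ?f "\<lambda>_. 0"]) (use d in auto)
  moreover have "0 * (p - 0) \<le> ?f p - ?f 0" by (rule lb_deriv[OF assms, of ?f "\<lambda>_. 0"]) (use d in auto)
  ultimately show ?thesis by simp
qed

lemma cont_FF: "continuous_on {0..b} FF"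
proof (rule continuous_at_imp_continuous_on, safe)
  fix x assume "x \<in> {0..b}"
  then have "-1 < x" by auto
  then show "isCont FF x" by (rule DERIV_isCont[OF FF_deriv])
qed

lemma rho_bounds: "\<exists>g>0. \<exists>K\<ge>0. \<forall>p\<ge>0. \<bar>FF p - FF 0 - g * p\<bar> \<le> K"
proof -
  define G where "G = FF pi - FF 0"
  define g where "g = G / pi"
  have G: "0 < G" using G_pos by (simp add: G_def)
  have g: "0 < g" using G by (simp add: g_def)
  define P where "P x = FF x - FF 0 - g * x" for x
  have Pper: "P (x + pi) = P x" if "0 \<le> x" for x
  proof -
    have "g * (x + pi) = g * x + G" by (simp add: g_def field_simps)
    then show ?thesis using FF_per[OF that] by (simp add: P_def G_def algebra_simps)
  qed
  have Pn: "P (x + real n * pi) = P x" if "0 \<le> x" for x n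
  proof (induction n)
    case (Suc n)
    have "P (x + real (Suc n) * pi) = P ((x + real n * pi) + pi)" by (simp add: algebra_simps)
    also have "\<dots> = P (x + real n * pi)" using that by (intro Pper) auto
    finally show ?case using Suc by simp
  qed simp
  have "continuous_on {0..pi} P" unfolding P_def by (intro continuous_intros cont_FF)
  then have "compact (P ` {0..pi})" by (intro compact_continuous_image) auto
  then have "bounded (P ` {0..pi})" by (rule compact_imp_bounded)
  then obtain K where K: "K > 0" "\<And>x. x \<in> {0..pi} \<Longrightarrow> norm (P x) \<le> K"
    unfolding bounded_pos by auto
  have "\<bar>P p\<bar> \<le> K" if p: "0 \<le> p" for p
  proof -
    define n where "n = nat \<lfloor>p / pi\<rfloor>"
    have fl: "real n = of_int \<lfloor>p / pi\<rfloor>" using p by (simp add: n_def)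
    have "real n \<le> p / pi" using fl by linarith
    then have a: "real n * pi \<le> p" by (simp add: pos_le_divide_eq)
    have "p / pi < real n + 1" using fl by linarith
    then have b: "p < real n * pi + pi" by (simp add: pos_divide_less_eq algebra_simps)
    have "P p = P ((p - real n * pi) + real n * pi)" by simp
    also have "\<dots> = P (p - real n * pi)" using a by (intro Pn) auto
    finally have "P p = P (p - real n * pi)" .
    moreover have "p - real n * pi \<in> {0..pi}" using a b by auto
    ultimately show ?thesis using K(2) by fastforce
  qed
  then have "\<forall>p\<ge>0. \<bar>FF p - FF 0 - g * p\<bar> \<le> K" by (simp add: P_def)
  then show ?thesis using g K(1) by (intro exI[of _ g] conjI exI[of _ K]) auto
qed



lemma matB_bound: "\<exists>\<beta>\<ge>0. \<forall>u v. norm ((sat u *\<^sub>R A1 + (1 - sat u) *\<^sub>R A0) *v v) \<le> \<beta> * norm v"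
proof -
  obtain K0 where K0: "\<forall>v. norm (A0 *v v) \<le> norm v * K0"
    using bounded_linear.bounded[OF matrix_vector_mul_bounded_linear[of A0]] by blast
  obtain K1 where K1: "\<forall>v. norm (A1 *v v) \<le> norm v * K1"
    using bounded_linear.bounded[OF matrix_vector_mul_bounded_linear[of A1]] by blast
  have "norm ((sat u *\<^sub>R A1 + (1 - sat u) *\<^sub>R A0) *v v) \<le> (\<bar>K0\<bar> + \<bar>K1\<bar>) * norm v" for u v
  proof -
    have e: "(sat u *\<^sub>R A1 + (1 - sat u) *\<^sub>R A0) *v v = sat u *\<^sub>R (A1 *v v) + (1 - sat u) *\<^sub>R (A0 *v v)"
      by (simp add: matrix_vector_mult_add_rdistrib scaleR_matrix_vector_assoc)
    have "norm (sat u *\<^sub>R (A1 *v v)) \<le> norm v * \<bar>K1\<bar>"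
    proof -
      have "norm (sat u *\<^sub>R (A1 *v v)) = sat u * norm (A1 *v v)" using sat_range[of u] by simp
      also have "\<dots> \<le> 1 * norm (A1 *v v)" using sat_range[of u] by (intro mult_right_mono) auto
      also have "\<dots> \<le> norm v * \<bar>K1\<bar>" using K1 by (simp add: order_trans[OF _ mult_left_mono[OF abs_ge_self]])
      finally show ?thesis .
    qed
    moreover have "norm ((1 - sat u) *\<^sub>R (A0 *v v)) \<le> norm v * \<bar>K0\<bar>"
    proof -
      have "norm ((1 - sat u) *\<^sub>R (A0 *v v)) = (1 - sat u) * norm (A0 *v v)" using sat_range[of u] by simp
      also have "\<dots> \<le> 1 * norm (A0 *v v)" using sat_range[of u] by (intro mult_right_mono) auto
      also have "\<dots> \<le> norm v * \<bar>K0\<bar>" using K0 by (simp add: order_trans[OF _ mult_left_mono[OF abs_ge_self]])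
      finally show ?thesis .
    qed
    ultimately show ?thesis unfolding e using norm_triangle_ineq[of "sat u *\<^sub>R (A1 *v v)" "(1 - sat u) *\<^sub>R (A0 *v v)"]
      by (simp add: algebra_simps)
  qed
  then show ?thesis by (intro exI[of _ "\<bar>K0\<bar> + \<bar>K1\<bar>"]) auto
qed

lemma g_lip:
  assumes \<beta>: "\<beta> \<ge> 0" "\<forall>u v. norm ((sat u *\<^sub>R A1 + (1 - sat u) *\<^sub>R A0) *v v) \<le> \<beta> * norm v"
    and R: "norm v \<le> R" "norm w \<le> R"
  shows "norm (g v u - g w u) \<le> \<beta> * (1 + 3 * R^2) * norm (v - w)"
proof -
  define M where "M = sat u *\<^sub>R A1 + (1 - sat u) *\<^sub>R A0"
  have Mb: "norm (M *v z) \<le> \<beta> * norm z" for z using \<beta> by (simp add: M_def)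
  have e: "g v u - g w u = (1 + (norm v)^2) *\<^sub>R (M *v (v - w)) + ((norm v)^2 - (norm w)^2) *\<^sub>R (M *v w)"
    by (simp add: g_def M_def matrix_vector_right_distrib algebra_simps)
  have R0: "0 \<le> R" using R norm_ge_zero order_trans by blast
  have n1: "norm ((1 + (norm v)^2) *\<^sub>R (M *v (v - w))) \<le> (1 + R^2) * (\<beta> * norm (v - w))"
  proof -
    have "norm ((1 + (norm v)^2) *\<^sub>R (M *v (v - w))) = (1 + (norm v)^2) * norm (M *v (v - w))" by simp
    also have "\<dots> \<le> (1 + R^2) * (\<beta> * norm (v - w))"
      using R Mb[of "v - w"] by (intro mult_mono) (auto intro!: power_mono)
    finally show ?thesis .
  qed
  have n2: "norm (((norm v)^2 - (norm w)^2) *\<^sub>R (M *v w)) \<le> (2 * R * norm (v - w)) * (\<beta> * R)"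
  proof -
    have a: "\<bar>(norm v)^2 - (norm w)^2\<bar> \<le> 2 * R * norm (v - w)"
    proof -
      have f: "(norm v)^2 - (norm w)^2 = (norm v - norm w) * (norm v + norm w)"
        by (simp add: power2_eq_square algebra_simps)
      have "\<bar>(norm v)^2 - (norm w)^2\<bar> = \<bar>norm v - norm w\<bar> * (norm v + norm w)"
        unfolding f abs_mult by simp
      also have "\<dots> \<le> norm (v - w) * (2 * R)"
        using R by (intro mult_mono norm_triangle_ineq3) auto
      finally show ?thesis by (simp add: algebra_simps)
    qed
    have b: "norm (M *v w) \<le> \<beta> * R" using Mb[of w] R \<beta> by (meson mult_left_mono order_trans)
    have "norm (((norm v)^2 - (norm w)^2) *\<^sub>R (M *v w)) = \<bar>(norm v)^2 - (norm w)^2\<bar> * norm (M *v w)" by simp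
    also have "\<dots> \<le> (2 * R * norm (v - w)) * (\<beta> * R)" using a b by (intro mult_mono) auto
    finally show ?thesis .
  qed
  have "norm (g v u - g w u) \<le> (1 + R^2) * (\<beta> * norm (v - w)) + (2 * R * norm (v - w)) * (\<beta> * R)"
    unfolding e using n1 n2 norm_triangle_ineq by (meson add_mono order_trans)
  also have "\<dots> = \<beta> * (1 + 3 * R^2) * norm (v - w)" by (simp add: algebra_simps power2_eq_square)
  finally show ?thesis .
qed

lemma uniq:
  fixes x y :: "real \<Rightarrow> real^2" and p :: "real \<Rightarrow> real"
  assumes cx: "continuous_on {0..1} x" and cy: "continuous_on {0..1} y"
    and dx: "\<And>t. t \<in> {0..1} \<Longrightarrow> (x has_vector_derivative (c *\<^sub>R g (x t) (p t))) (at t within {0..1})"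
    and dy: "\<And>t. t \<in> {0..1} \<Longrightarrow> (y has_vector_derivative (c *\<^sub>R g (y t) (p t))) (at t within {0..1})"
    and e0: "x 0 = y 0"
  shows "x 1 = y 1"
proof -
  obtain \<beta> where \<beta>: "\<beta> \<ge> 0" "\<forall>u v. norm ((sat u *\<^sub>R A1 + (1 - sat u) *\<^sub>R A0) *v v) \<le> \<beta> * norm v"
    using matB_bound by blast
  have "compact (x ` {0..1} \<union> y ` {0..1})" using cx cy by (intro compact_Un compact_continuous_image) auto
  then have "bounded (x ` {0..1} \<union> y ` {0..1})" by (rule compact_imp_bounded)
  then obtain R where R: "R > 0" "\<And>z. z \<in> x ` {0..1} \<union> y ` {0..1} \<Longrightarrow> norm z \<le> R"
    unfolding bounded_pos by metis
  define L where "L = \<bar>c\<bar> * (\<beta> * (1 + 3 * R^2))"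
  have L0: "0 \<le> L" using \<beta> by (simp add: L_def)
  define d where "d t = x t - y t" for t
  define D where "D t = c *\<^sub>R (g (x t) (p t) - g (y t) (p t))" for t
  have dD: "(d has_vector_derivative D t) (at t within {0..1})" if "t \<in> {0..1}" for t
    unfolding d_def[abs_def] D_def using dx[OF that] dy[OF that]
    by (auto intro!: derivative_eq_intros simp: algebra_simps)
  have DL: "norm (D t) \<le> L * norm (d t)" if "t \<in> {0..1}" for t
  proof -
    have "norm (D t) = \<bar>c\<bar> * norm (g (x t) (p t) - g (y t) (p t))" by (simp add: D_def)
    also have "\<dots> \<le> \<bar>c\<bar> * (\<beta> * (1 + 3 * R^2) * norm (x t - y t))"
      using that R(2) by (intro mult_left_mono g_lip[OF \<beta>]) auto
    finally show ?thesis by (simp add: L_def d_def algebra_simps)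
  qed
  define e where "e t = (d t \<bullet> d t) * exp (- 2 * L * t)" for t
  define e' where "e' t = (2 * (d t \<bullet> D t) - 2 * L * (d t \<bullet> d t)) * exp (- 2 * L * t)" for t
  have de: "(e has_derivative (\<lambda>h. e' t * h)) (at t within {0..1})" if "t \<in> {0..1}" for t
  proof -
    have d1: "(d has_derivative (\<lambda>h. h *\<^sub>R D t)) (at t within {0..1})"
      using dD[OF that] by (simp add: has_vector_derivative_def)
    have X: "((\<lambda>t. d t \<bullet> d t) has_derivative (\<lambda>h. d t \<bullet> (h *\<^sub>R D t) + (h *\<^sub>R D t) \<bullet> d t)) (at t within {0..1})"
      by (rule has_derivative_inner[OF d1 d1])
    have eq: "(\<lambda>h. d t \<bullet> (h *\<^sub>R D t) + (h *\<^sub>R D t) \<bullet> d t) = (*) (2 * (d t \<bullet> D t))"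
      by (auto simp: fun_eq_iff inner_commute algebra_simps)
    have "((\<lambda>t. d t \<bullet> d t) has_real_derivative (2 * (d t \<bullet> D t))) (at t within {0..1})"
      unfolding has_field_derivative_def using X[unfolded eq] .
    then have "(e has_real_derivative (2 * (d t \<bullet> D t)) * exp (- 2 * L * t) + (d t \<bullet> d t) * (exp (- 2 * L * t) * (- 2 * L))) (at t within {0..1})"
      unfolding e_def[abs_def] by (auto intro!: derivative_eq_intros)
    then have "(e has_real_derivative e' t) (at t within {0..1})"
      by (simp add: e'_def algebra_simps)
    then show ?thesis by (simp add: has_field_derivative_def)
  qed
  have e'neg: "e' t \<le> 0" if "t \<in> {0..1}" for t
  proof -
    have "d t \<bullet> D t \<le> norm (d t) * norm (D t)" by (rule Cauchy_Schwarz_ineq2[THEN order_trans[OF abs_ge_self]])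
    also have "\<dots> \<le> norm (d t) * (L * norm (d t))" using DL[OF that] by (intro mult_left_mono) auto
    also have "\<dots> = L * (d t \<bullet> d t)" by (simp add: power2_norm_eq_inner[symmetric] power2_eq_square)
    finally have "2 * (d t \<bullet> D t) - 2 * L * (d t \<bullet> d t) \<le> 0" by simp
    then show ?thesis unfolding e'_def by (simp add: mult_nonpos_nonneg)
  qed
  obtain \<xi> where \<xi>: "\<xi> \<in> {0..1}" "e 1 - e 0 = (\<lambda>h. e' \<xi> * h) (1 - 0)"
    using mvt_very_simple[of 0 1 e "\<lambda>t h. e' t * h"] de by force
  have "e 0 = 0" by (simp add: e_def d_def e0)
  then have "e 1 \<le> 0" using \<xi> e'neg by simp
  then have "d 1 \<bullet> d 1 \<le> 0" by (simp add: e_def mult_le_0_iff)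
  then have "d 1 = 0" using inner_ge_zero[of "d 1"] by (simp add: order_antisym)
  then show ?thesis by (simp add: d_def)
qed



definition e1 :: "real^2" where "e1 = vector [1, 0]"
definition e2 :: "real^2" where "e2 = vector [0, 1]"
definition UU :: "real \<Rightarrow> real^2" where "UU p = cos p *\<^sub>R e1 - sin p *\<^sub>R e2"
definition UU' :: "real \<Rightarrow> real^2" where "UU' p = (- sin p) *\<^sub>R e1 - cos p *\<^sub>R e2"

lemma UU_comp: "UU p $ 1 = cos p" "UU p $ 2 = - sin p" "UU' p $ 1 = - sin p" "UU' p $ 2 = - cos p"
  by (simp_all add: UU_def UU'_def e1_def e2_def)

lemma norm2_vec2: "(norm (v::real^2))^2 = (v$1)^2 + (v$2)^2"
  by (simp add: norm_vec_def L2_set_def sum_2)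

lemma norm_UU: "norm (UU p) = 1"
proof -
  have "(norm (UU p))^2 = 1" by (simp add: norm2_vec2 UU_comp)
  then show ?thesis using norm_ge_zero[of "UU p"] power2_eq_1_iff[of "norm (UU p)"] by linarith
qed

lemma poly1:
  fixes C S l :: real
  shows "((-1/10*C^2 + 3/2*C*S) + l*(1/10*C^2 - 3*C*S - 1/10*S^2)) * C
       + ((-1/10*C*S - 1/2*S^2 - 2*C^2) + l*(1/5*C*S - 3/2*S^2 + 3/2*C^2)) * S
     = ((l * 0 + (1 - l) * (-1/10)) * C + (l * 2 + (1 - l) * (1/2)) * (- S)) * (C^2 + S^2)"
  by (simp add: field_simps power2_eq_square)

lemma poly2:
  fixes C S l :: real
  shows "- ((-1/10*C^2 + 3/2*C*S) + l*(1/10*C^2 - 3*C*S - 1/10*S^2)) * S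
       + ((-1/10*C*S - 1/2*S^2 - 2*C^2) + l*(1/5*C*S - 3/2*S^2 + 3/2*C^2)) * C
     = ((l * (-1/2) + (1 - l) * (-2)) * C + (l * (-1/10) + (1 - l) * 0) * (- S)) * (C^2 + S^2)"
  by (simp add: field_simps power2_eq_square)

lemma key_alg:
  "bq p l *\<^sub>R UU p + (- aq p l) *\<^sub>R UU' p = (l *\<^sub>R A1 + (1 - l) *\<^sub>R A0) *v UU p"
proof -
  let ?C = "cos p" and ?S = "sin p"
  have cs: "?C^2 + ?S^2 = 1" by simp
  have c1: "bq p l * ?C + aq p l * ?S = (l * 0 + (1 - l) * (-1/10)) * ?C + (l * 2 + (1 - l) * (1/2)) * (- ?S)"
    using poly1[of ?C ?S l] unfolding bq_def aq_def cs by simp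
  have c2: "- bq p l * ?S + aq p l * ?C = (l * (-1/2) + (1 - l) * (-2)) * ?C + (l * (-1/10) + (1 - l) * 0) * (- ?S)"
    using poly2[of ?C ?S l] unfolding bq_def aq_def cs by simp
  have l1: "(bq p l *\<^sub>R UU p + (- aq p l) *\<^sub>R UU' p) $ 1 = bq p l * ?C + aq p l * ?S"
    by (simp add: UU_comp)
  have l2: "(bq p l *\<^sub>R UU p + (- aq p l) *\<^sub>R UU' p) $ 2 = - bq p l * ?S + aq p l * ?C"
    by (simp add: UU_comp)
  have r1: "((l *\<^sub>R A1 + (1 - l) *\<^sub>R A0) *v UU p) $ 1 = (l * 0 + (1 - l) * (-1/10)) * ?C + (l * 2 + (1 - l) * (1/2)) * (- ?S)"
    by (simp add: matrix_vector_mult_def sum_2 A0_def A1_def UU_comp)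
  have r2: "((l *\<^sub>R A1 + (1 - l) *\<^sub>R A0) *v UU p) $ 2 = (l * (-1/2) + (1 - l) * (-2)) * ?C + (l * (-1/10) + (1 - l) * 0) * (- ?S)"
    by (simp add: matrix_vector_mult_def sum_2 A0_def A1_def UU_comp)
  show ?thesis
    unfolding vec_eq_iff forall_2 using l1 l2 r1 r2 c1 c2 by simp
qed



lemma gam_deriv:
  assumes "0 < q"
  shows "((\<lambda>p. exp (FF p - FF 0 - R0) *\<^sub>R UU p) has_vector_derivative
          (exp (FF q - FF 0 - R0) * hh q) *\<^sub>R UU q + exp (FF q - FF 0 - R0) *\<^sub>R UU' q) (at q)"
proof -
  have dF: "(FF has_real_derivative hh q) (at q)" using assms by (intro FF_deriv) auto
  have dU: "(UU has_vector_derivative UU' q) (at q)"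
    unfolding UU_def[abs_def] UU'_def
    by (auto intro!: derivative_eq_intros simp: has_real_derivative_iff_has_vector_derivative[symmetric])
  have de: "((\<lambda>p. exp (FF p - FF 0 - R0)) has_real_derivative exp (FF q - FF 0 - R0) * hh q) (at q)"
    using dF by (auto intro!: derivative_eq_intros)
  show ?thesis using has_vector_derivative_scaleR[OF de dU] by (simp add: algebra_simps)
qed

lemma phase1:
  obtains c R0 gg K \<rho> w \<Phi> where "c > 0" "gg > 0" "K \<ge> 0"
    "\<And>p. \<rho> p = FF p - FF 0 - R0"
    "\<And>p. w p = 1 / (c * (1 + exp (2 * \<rho> p)) * (- aq p (lam p)))"
    "\<And>p. 0 < w p"
    "\<And>p. 0 \<le> p \<Longrightarrow> gg * p - K - R0 \<le> \<rho> p"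
    "\<And>p. 0 \<le> p \<Longrightarrow> \<rho> p \<le> gg * p + K - R0"
    "\<And>p. 0 \<le> p \<Longrightarrow> p \<le> 21/5*c + 1 \<Longrightarrow> \<rho> p \<le> 0"
    "\<And>p. 0 < p \<Longrightarrow> (\<Phi> has_real_derivative w p) (at p)"
    "\<Phi> (21/5*c + 1) - \<Phi> 1 \<ge> 1"
    "\<And>q. 21/5*c + 1 \<le> q \<Longrightarrow> \<Phi> q - \<Phi> (21/5*c + 1) \<le> 1/2"
proof -
  obtain gg K where gg: "gg > 0" and K: "K \<ge> 0" and bd: "\<And>p. 0 \<le> p \<Longrightarrow> \<bar>FF p - FF 0 - gg * p\<bar> \<le> K"
    using rho_bounds by blast
  define T1 where "T1 = exp (4*K) / (4/5*gg)"
  have T1: "T1 > 0" using gg by (simp add: T1_def)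
  define c where "c = 2 * T1 + 1"
  have c: "c > 0" using T1 by (simp add: c_def)
  define \<psi>1 where "\<psi>1 = 21/5*c + 1"
  define R0 where "R0 = K + gg * \<psi>1"
  define \<rho> where "\<rho> p = FF p - FF 0 - R0" for p
  define w where "w p = 1 / (c * (1 + exp (2 * \<rho> p)) * (- aq p (lam p)))" for p
  define \<Phi> where "\<Phi> p = integral {0..p} w" for p
  have r1: "gg * p - K - R0 \<le> \<rho> p" "\<rho> p \<le> gg * p + K - R0" if "0 \<le> p" for p
    using bd[OF that] by (auto simp: \<rho>_def)
  have r0: "\<rho> p \<le> 0" if "0 \<le> p" "p \<le> \<psi>1" for p
  proof -
    have "gg * p \<le> gg * \<psi>1" using that gg by (intro mult_left_mono) auto
    then show ?thesis using r1(2)[OF that(1)] by (simp add: R0_def)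
  qed
  have aqn: "0 < - aq p (lam p)" for p using aq_lam_neg[of p] by simp
  have wpos: "0 < w p" for p
  proof -
    have "0 < c * (1 + exp (2 * \<rho> p)) * (- aq p (lam p))" using c aqn[of p]
      by (intro mult_pos_pos add_pos_pos) auto
    then show ?thesis by (simp add: w_def)
  qed
  have cw: "continuous_on {0..b} w" for b
  proof -
    have "continuous_on {0..b} \<rho>" unfolding \<rho>_def[abs_def] by (intro continuous_intros cont_FF)
    moreover have ne1: "1 + exp x \<noteq> 0" for x :: real using exp_gt_zero[of x] by linarith
    moreover have ne2: "aq p (lam p) \<noteq> 0" for p using aq_lam_neg[of p] by simp
    ultimately show ?thesis unfolding w_def[abs_def] using c
      by (intro continuous_intros cont_aq) auto
  qed
  have dP: "(\<Phi> has_real_derivative w p) (at p)" if "0 < p" for p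
  proof -
    have "((\<lambda>x. integral {0..x} w) has_real_derivative w p) (at p within {0..p+1})"
      using that by (intro integral_has_real_derivative cw) auto
    moreover have "at p within {0..p+1} = at p" using that by (intro at_within_Icc_at) auto
    ultimately show ?thesis by (simp add: \<Phi>_def[abs_def])
  qed
  have P2: "\<Phi> \<psi>1 - \<Phi> 1 \<ge> 1"
  proof -
    have "(1 / (c * 2 * (21/10))) * (\<psi>1 - 1) \<le> \<Phi> \<psi>1 - \<Phi> 1"
    proof (rule lb_deriv[of 1 \<psi>1 \<Phi> w])
      show "1 \<le> \<psi>1" using c by (simp add: \<psi>1_def)
      show "(\<Phi> has_real_derivative w x) (at x)" if "1 \<le> x" "x \<le> \<psi>1" for x using that by (intro dP) auto
      show "1 / (c * 2 * (21 / 10)) \<le> w x" if "1 \<le> x" "x \<le> \<psi>1" for x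
      proof -
        have "exp (2 * \<rho> x) \<le> 1" using r0[of x] that by simp
        moreover have "- aq x (lam x) \<le> 21/10" using aq_bounds(2)[of "lam x" x] lam_range[of x] by linarith
        ultimately have le: "c * (1 + exp (2 * \<rho> x)) * (- aq x (lam x)) \<le> c * 2 * (21/10)"
          using c aqn[of x] by (intro mult_mono) auto
        have B: "0 < c * (1 + exp (2 * \<rho> x)) * (- aq x (lam x))" using c aqn[of x]
          by (intro mult_pos_pos add_pos_pos) auto
        have A: "0 < c * 2 * (21/10)" using c by simp
        show ?thesis unfolding w_def
          by (rule divide_left_mono[OF le zero_le_one mult_pos_pos[OF A B]])
      qed
    qed
    then show ?thesis using c by (simp add: \<psi>1_def)
  qed
  have P3: "\<Phi> q - \<Phi> \<psi>1 \<le> 1/2" if q: "\<psi>1 \<le> q" for q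
  proof -
    define E where "E p = - exp (4*K - 2*gg*(p - \<psi>1)) / (c * (2/5) * 2 * gg)" for p
    define E' where "E' p = exp (4*K - 2*gg*(p - \<psi>1)) / (c * (2/5))" for p
    have dE: "(E has_real_derivative E' p) (at p)" for p
      unfolding E_def[abs_def] E'_def using gg c by (auto intro!: derivative_eq_intros simp: field_simps)
    have wE: "w p \<le> E' p" if "\<psi>1 \<le> p" for p
    proof -
      have p0: "0 \<le> p" using that c by (simp add: \<psi>1_def)
      have "2*gg*(p - \<psi>1) - 4*K \<le> 2 * \<rho> p" using r1(1)[OF p0] by (simp add: R0_def algebra_simps)
      then have ex: "exp (2*gg*(p - \<psi>1) - 4*K) \<le> exp (2 * \<rho> p)" by simp
      have "- aq p (lam p) \<ge> 2/5" using aq_bounds(1)[of "lam p" p] lam_range[of p] by linarith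
      moreover have ex2: "exp (2*gg*(p - \<psi>1) - 4*K) \<le> 1 + exp (2 * \<rho> p)" using ex by linarith
      ultimately have le: "c * exp (2*gg*(p - \<psi>1) - 4*K) * (2/5) \<le> c * (1 + exp (2 * \<rho> p)) * (- aq p (lam p))"
        using c by (intro mult_mono) auto
      have B: "0 < c * (1 + exp (2 * \<rho> p)) * (- aq p (lam p))" using c aqn[of p]
        by (intro mult_pos_pos add_pos_pos) auto
      have A: "0 < c * exp (2*gg*(p - \<psi>1) - 4*K) * (2/5)" using c by simp
      have "w p \<le> 1 / (c * exp (2*gg*(p - \<psi>1) - 4*K) * (2/5))"
        unfolding w_def by (rule divide_left_mono[OF le zero_le_one mult_pos_pos[OF B A]])
      also have "\<dots> = E' p" unfolding E'_def by (simp add: exp_diff exp_minus field_simps)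
      finally show ?thesis .
    qed
    have "(\<lambda>p. \<Phi> p - E p) q - (\<lambda>p. \<Phi> p - E p) \<psi>1 \<le> 0 * (q - \<psi>1)"
    proof (rule ub_deriv[OF q, of _ "\<lambda>p. w p - E' p"])
      show "((\<lambda>p. \<Phi> p - E p) has_real_derivative w x - E' x) (at x)" if "\<psi>1 \<le> x" "x \<le> q" for x
        using that c by (intro derivative_intros dP dE) (auto simp: \<psi>1_def)
      show "w x - E' x \<le> 0" if "\<psi>1 \<le> x" "x \<le> q" for x using wE[of x] that by simp
    qed
    then have "\<Phi> q - \<Phi> \<psi>1 \<le> E q - E \<psi>1" by simp
    also have "\<dots> \<le> - E \<psi>1" using c gg by (simp add: E_def)
    also have "\<dots> = T1 / c" by (simp add: E_def T1_def field_simps)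
    also have "\<dots> \<le> 1/2" using T1 c by (simp add: c_def field_simps)
    finally show ?thesis .
  qed
  show ?thesis
    by (rule that[of c gg K \<rho> R0 w \<Phi>]) (use c gg K r1 r0 dP P2 P3 wpos in \<open>auto simp: \<rho>_def w_def \<psi>1_def\<close>)
qed

lemma phase2:
  fixes \<Phi> w :: "real \<Rightarrow> real"
  assumes wpos: "\<And>p. 0 < w p"
    and dP: "\<And>p. 0 < p \<Longrightarrow> (\<Phi> has_real_derivative w p) (at p)"
    and P2: "\<Phi> \<psi>1 - \<Phi> 1 \<ge> 1"
    and P3: "\<And>q. \<psi>1 \<le> q \<Longrightarrow> \<Phi> q - \<Phi> \<psi>1 \<le> 1/2"
    and E: "\<psi>1 \<le> \<psi>E" and p1: "1 \<le> \<psi>1"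
  obtains \<psi>s \<psi>t where "1 \<le> \<psi>s" "\<psi>s \<le> \<psi>1" "\<psi>t 0 = \<psi>s" "\<psi>t 1 = \<psi>E"
    "\<And>t. t \<in> {0..1} \<Longrightarrow> 1/2 \<le> \<psi>t t"
    "\<And>t. t \<in> {0..1} \<Longrightarrow> (\<psi>t has_real_derivative inverse (w (\<psi>t t))) (at t)"
    "continuous_on {0..1} \<psi>t"
proof -
  have mono: "\<Phi> a < \<Phi> b" if "0 < a" "a < b" for a b
  proof (rule DERIV_pos_imp_increasing[OF that(2)])
    fix x assume "a \<le> x" "x \<le> b"
    then have "0 < x" using that by linarith
    then show "\<exists>y. (\<Phi> has_real_derivative y) (at x) \<and> 0 < y" using dP[of x] wpos[of x] by blast
  qed
  have mono_le: "\<Phi> a \<le> \<Phi> b" if "0 < a" "a \<le> b" for a b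
    using mono[of a b] that by (cases "a = b") auto
  have contP: "continuous_on {a..b} \<Phi>" if "0 < a" for a b
    by (rule continuous_at_imp_continuous_on) (use that in \<open>auto intro!: DERIV_isCont dP\<close>)
  obtain \<psi>s where s: "1 \<le> \<psi>s" "\<psi>s \<le> \<psi>1" "\<Phi> \<psi>E - \<Phi> \<psi>s = 1"
  proof -
    have "\<exists>x. 1 \<le> x \<and> x \<le> \<psi>1 \<and> (\<lambda>x. \<Phi> \<psi>E - \<Phi> x) x = 1"
    proof (rule IVT2')
      show "(\<lambda>x. \<Phi> \<psi>E - \<Phi> x) \<psi>1 \<le> 1" using P3[OF E] by simp
      show "1 \<le> (\<lambda>x. \<Phi> \<psi>E - \<Phi> x) 1" using P2 mono_le[OF _ E] p1 by simp
      show "1 \<le> \<psi>1" by (rule p1)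
      show "continuous_on {1..\<psi>1} (\<lambda>x. \<Phi> \<psi>E - \<Phi> x)" by (intro continuous_intros contP) auto
    qed
    then show ?thesis using that by auto
  qed
  define S where "S = {1/2..\<psi>E+1}"
  define \<Psi> where "\<Psi> = the_inv_into S \<Phi>"
  define a where "a = \<Phi> (1/2)"
  define b where "b = \<Phi> (\<psi>E+1)"
  have inj: "inj_on \<Phi> S"
  proof (rule inj_onI)
    fix x y assume xy: "x \<in> S" "y \<in> S" "\<Phi> x = \<Phi> y"
    show "x = y"
    proof (rule ccontr)
      assume "x \<noteq> y"
      have pos: "0 < x" "0 < y" using xy by (auto simp: S_def)
      then consider "x < y" | "y < x" using \<open>x \<noteq> y\<close> by linarith
      then show False
      proof cases
        case 1 then show False using mono[of x y] pos xy(3) by simp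
      next
        case 2 then show False using mono[of y x] pos xy(3) by simp
      qed
    qed
  qed
  have img: "{a..b} \<subseteq> \<Phi> ` S"
  proof
    fix y assume y: "y \<in> {a..b}"
    have "\<exists>x. 1/2 \<le> x \<and> x \<le> \<psi>E+1 \<and> \<Phi> x = y"
      using y p1 E by (intro IVT' contP) (auto simp: a_def b_def)
    then show "y \<in> \<Phi> ` S" by (auto simp: S_def)
  qed
  have PsiP: "\<Phi> (\<Psi> y) = y" "\<Psi> y \<in> S" if "y \<in> {a..b}" for y
    using f_the_inv_into_f[OF inj] the_inv_into_into[OF inj] img that by (auto simp: \<Psi>_def)
  have PPsi: "\<Psi> (\<Phi> x) = x" if "x \<in> S" for x
    using the_inv_into_f_f[OF inj that] by (simp add: \<Psi>_def)
  have contPsi: "continuous_on (\<Phi> ` S) \<Psi>"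
  proof (rule continuous_on_inv)
    show "continuous_on S \<Phi>" unfolding S_def by (rule contP) simp
    show "compact S" unfolding S_def by simp
    show "\<forall>x\<in>S. \<Psi> (\<Phi> x) = x" using PPsi by blast
  qed
  have isc: "isCont \<Psi> y" if "y \<in> {a<..<b}" for y
  proof (rule continuous_on_interior[OF contPsi])
    have "{a<..<b} \<subseteq> interior (\<Phi> ` S)" using img by (intro interior_maximal) auto
    then show "y \<in> interior (\<Phi> ` S)" using that by auto
  qed
  have dPsi: "DERIV \<Psi> y :> inverse (w (\<Psi> y))" if "y \<in> {a<..<b}" for y
  proof (rule DERIV_inverse_function[where f=\<Phi> and g=\<Psi> and x=y and a=a and b=b])
    have "\<Psi> y \<in> S" using PsiP that by auto
    then show "DERIV \<Phi> (\<Psi> y) :> w (\<Psi> y)" by (intro dP) (auto simp: S_def)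
    show "w (\<Psi> y) \<noteq> 0" using wpos[of "\<Psi> y"] by simp
    show "a < y" "y < b" using that by auto
    show "\<Phi> (\<Psi> z) = z" if "a < z" "z < b" for z using PsiP that by auto
    show "isCont \<Psi> y" by (rule isc[OF that])
  qed
  define s0 where "s0 = \<Phi> \<psi>s"
  define \<psi>t where "\<psi>t t = \<Psi> (s0 + t)" for t
  have rng: "s0 + t \<in> {a<..<b}" if "t \<in> {0..1}" for t
  proof -
    have "a < s0" unfolding a_def s0_def using s by (intro mono) auto
    moreover have "s0 + 1 < b" unfolding b_def using s(3) mono[of \<psi>E "\<psi>E + 1"] p1 E by (simp add: s0_def)
    ultimately show ?thesis using that by auto
  qed
  have h1: "1/2 \<le> \<psi>t t" if "t \<in> {0..1}" for t
    using PsiP(2)[of "s0 + t"] rng[OF that] by (auto simp: \<psi>t_def S_def)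
  have h2: "(\<psi>t has_real_derivative inverse (w (\<psi>t t))) (at t)" if "t \<in> {0..1}" for t
  proof -
    have "((\<lambda>t. \<Psi> (s0 + t)) has_real_derivative inverse (w (\<Psi> (s0 + t))) * 1) (at t)"
      using dPsi[OF rng[OF that]] by (intro DERIV_chain'[where f="\<lambda>t. s0 + t"]) (auto intro!: derivative_eq_intros)
    then show ?thesis by (simp add: \<psi>t_def[abs_def])
  qed
  have h3: "continuous_on {0..1} \<psi>t"
  proof (rule continuous_at_imp_continuous_on, rule ballI)
    fix x :: real assume "x \<in> {0..1}"
    then show "isCont \<psi>t x" using h2 by (blast intro: DERIV_isCont)
  qed
  have h0: "\<psi>t 0 = \<psi>s" using PPsi[of \<psi>s] s p1 E by (simp add: \<psi>t_def s0_def S_def)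
  have h1': "\<psi>t 1 = \<psi>E"
  proof -
    have "s0 + 1 = \<Phi> \<psi>E" using s(3) by (simp add: s0_def)
    then show ?thesis using PPsi[of \<psi>E] p1 E by (simp add: \<psi>t_def S_def)
  qed
  show ?thesis by (rule that[of \<psi>s \<psi>t]) (use s h0 h1' h1 h2 h3 in auto)
qed

lemma key_eq:
  assumes c: "0 < c" and w: "w = 1 / (c * (1 + exp (2 * r)) * (- aq q (lam q)))"
  shows "inverse w *\<^sub>R ((exp r * hh q) *\<^sub>R UU q + exp r *\<^sub>R UU' q) = c *\<^sub>R g (exp r *\<^sub>R UU q) (lam q)"
proof -
  let ?l = "lam q" and ?a = "- aq q (lam q)"
  have a: "0 < ?a" using aq_lam_neg[of q] by simp
  have iw: "inverse w = c * (1 + exp (2 * r)) * ?a" using w by simp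
  have ha: "?a * hh q = bq q ?l" using a by (simp add: hh_def)
  have sl: "sat ?l = ?l" using lam_range[of q] by (intro sat_id) auto
  have n: "(norm (exp r *\<^sub>R UU q))^2 = exp (2 * r)"
    using norm_UU[of q] by (simp add: power_mult_distrib exp_double[symmetric] mult.commute)
  have "inverse w *\<^sub>R ((exp r * hh q) *\<^sub>R UU q + exp r *\<^sub>R UU' q)
      = (c * (1 + exp (2 * r)) * exp r) *\<^sub>R ((?a * hh q) *\<^sub>R UU q + ?a *\<^sub>R UU' q)"
    unfolding iw by (simp add: algebra_simps)
  also have "\<dots> = (c * (1 + exp (2 * r)) * exp r) *\<^sub>R ((?l *\<^sub>R A1 + (1 - ?l) *\<^sub>R A0) *v UU q)"
    unfolding ha key_alg[symmetric] by simp
  also have "\<dots> = c *\<^sub>R g (exp r *\<^sub>R UU q) (lam q)"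
    unfolding g_def sl n by (simp add: matrix_vector_mult_scaleR)
  finally show ?thesis .
qed

theorem lemma1:
  shows "\<exists>c>0. \<forall>M>0. \<exists>(z10 :: real \<Rightarrow> real) (x0 :: real \<Rightarrow> real^2).
           continuous_on {-2..0} z10 \<and> (\<forall>t\<in>{-2..0}. \<bar>z10 t\<bar> \<le> 1) \<and> z10 0 = 0 \<and>
           continuous_on {-2..0} x0 \<and> (\<forall>t\<in>{-2..0}. norm (x0 t) \<le> 1) \<and>
           (\<forall>z20 :: real \<Rightarrow> real. continuous_on {-2..0} z20 \<and> (\<forall>t\<in>{-2..-1}. z20 t = 1) \<longrightarrow>
              (\<exists>x z1 z2. is_solution c x0 z10 z20 x z1 z2) \<and>
              (\<forall>x z1 z2. is_solution c x0 z10 z20 x z1 z2 \<longrightarrow> norm (x 1) \<ge> 2 * M))"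
proof -
  obtain c gg K \<rho> R0 w \<Phi> where c: "c > 0" and gg: "gg > 0" and K: "K \<ge> 0"
    and rho: "\<And>p. \<rho> p = FF p - FF 0 - R0"
    and wdef: "\<And>p. w p = 1 / (c * (1 + exp (2 * \<rho> p)) * (- aq p (lam p)))"
    and wpos: "\<And>p. 0 < w p"
    and rlo: "\<And>p. 0 \<le> p \<Longrightarrow> gg * p - K - R0 \<le> \<rho> p"
    and rhi: "\<And>p. 0 \<le> p \<Longrightarrow> \<rho> p \<le> gg * p + K - R0"
    and r0: "\<And>p. 0 \<le> p \<Longrightarrow> p \<le> 21/5*c + 1 \<Longrightarrow> \<rho> p \<le> 0"
    and dP: "\<And>p. 0 < p \<Longrightarrow> (\<Phi> has_real_derivative w p) (at p)"
    and P2: "\<Phi> (21/5*c + 1) - \<Phi> 1 \<ge> 1"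
    and P3: "\<And>q. 21/5*c + 1 \<le> q \<Longrightarrow> \<Phi> q - \<Phi> (21/5*c + 1) \<le> 1/2"
    by (rule phase1) blast
  define \<psi>1 where "\<psi>1 = 21/5*c + 1"
  have p1: "1 \<le> \<psi>1" using c by (simp add: \<psi>1_def)
  define \<gamma> where "\<gamma> p = exp (\<rho> p) *\<^sub>R UU p" for p
  have \<gamma>eq: "\<gamma> = (\<lambda>p. exp (FF p - FF 0 - R0) *\<^sub>R UU p)" by (simp add: \<gamma>_def[abs_def] rho)
  have d\<gamma>: "(\<gamma> has_vector_derivative (exp (\<rho> q) * hh q) *\<^sub>R UU q + exp (\<rho> q) *\<^sub>R UU' q) (at q)" if "0 < q" for q
    unfolding \<gamma>eq rho using gam_deriv[OF that] .
  have n\<gamma>: "norm (\<gamma> p) = exp (\<rho> p)" for p by (simp add: \<gamma>_def norm_UU)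
  show ?thesis
  proof (intro exI[of _ c] conjI c allI impI)
    fix M :: real assume M: "0 < M"
    define X where "X = max \<psi>1 ((ln (2*M) + K + R0)/gg)"
    define k where "k = nat \<lceil>X/pi\<rceil>"
    define \<psi>E where "\<psi>E = real k * pi + pi/4"
    have X1: "\<psi>1 \<le> X" "(ln (2*M) + K + R0)/gg \<le> X" by (simp_all add: X_def)
    have kX: "X \<le> real k * pi"
    proof -
      have "X/pi \<le> real k" unfolding k_def by linarith
      then show ?thesis by (simp add: divide_le_eq)
    qed
    have E: "\<psi>1 \<le> \<psi>E" using X1 kX pi_gt_zero unfolding \<psi>E_def by linarith
    have lamE: "lam \<psi>E = 0"
    proof -
      have "2 * \<psi>E = 2 * real k * pi + pi/2" by (simp add: \<psi>E_def algebra_simps)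
      then have "sin (2 * \<psi>E) = 1" by (simp add: sin_add)
      then show ?thesis by (simp add: lam_def sat_def)
    qed
    have bigE: "2 * M \<le> exp (\<rho> \<psi>E)"
    proof -
      have "ln (2*M) + K + R0 \<le> gg * X" using X1(2) gg by (simp add: divide_le_eq mult.commute)
      also have "\<dots> \<le> gg * \<psi>E"
      proof -
        have "X \<le> \<psi>E" using kX pi_gt_zero unfolding \<psi>E_def by linarith
        then show ?thesis using gg by simp
      qed
      finally have "ln (2*M) \<le> \<rho> \<psi>E" using rlo[of \<psi>E] E p1 by simp
      then have "exp (ln (2*M)) \<le> exp (\<rho> \<psi>E)" by simp
      then show ?thesis using M by simp
    qed
    obtain \<psi>s \<psi>t where s1: "1 \<le> \<psi>s" "\<psi>s \<le> \<psi>1" and t0: "\<psi>t 0 = \<psi>s" and t1: "\<psi>t 1 = \<psi>E"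
      and tpos: "\<And>t. t \<in> {0..1} \<Longrightarrow> 1/2 \<le> \<psi>t t"
      and td: "\<And>t. t \<in> {0..1} \<Longrightarrow> (\<psi>t has_real_derivative inverse (w (\<psi>t t))) (at t)"
      and tc: "continuous_on {0..1} \<psi>t"
      using phase2[of w \<Phi> \<psi>1 \<psi>E] wpos dP P2 P3 E p1 unfolding \<psi>1_def by blast
    define z10 where "z10 s = lam (\<psi>t (max 0 (s+1)))" for s
    define x0 :: "real \<Rightarrow> real^2" where "x0 t = \<gamma> \<psi>s" for t
    define xs where "xs t = \<gamma> (\<psi>t (max 0 t))" for t
    have z10_0: "z10 0 = 0" using lamE t1 by (simp add: z10_def)
    have z10c: "continuous_on {-2..0} z10"
    proof -
      have "continuous_on {-2..0} (\<lambda>s. \<psi>t (max 0 (s+1)))"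
        by (rule continuous_on_compose2[OF tc]) (auto intro!: continuous_intros)
      then show ?thesis unfolding z10_def[abs_def] by (rule continuous_on_compose2[OF cont_lam]) auto
    qed
    have dxs0: "((\<lambda>t. \<gamma> (\<psi>t t)) has_vector_derivative c *\<^sub>R g (\<gamma> (\<psi>t t)) (lam (\<psi>t t))) (at t)"
      if t: "t \<in> {0..1}" for t
    proof -
      let ?q = "\<psi>t t"
      have q: "0 < ?q" using tpos[OF t] by linarith
      have "(\<psi>t has_vector_derivative inverse (w ?q)) (at t)"
        using td[OF t] by (simp add: has_real_derivative_iff_has_vector_derivative)
      from vector_diff_chain_at[OF this d\<gamma>[OF q]]
      have "((\<lambda>t. \<gamma> (\<psi>t t)) has_vector_derivative inverse (w ?q) *\<^sub>R ((exp (\<rho> ?q) * hh ?q) *\<^sub>R UU ?q + exp (\<rho> ?q) *\<^sub>R UU' ?q)) (at t)"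
        by (simp add: o_def)
      also have "inverse (w ?q) *\<^sub>R ((exp (\<rho> ?q) * hh ?q) *\<^sub>R UU ?q + exp (\<rho> ?q) *\<^sub>R UU' ?q) = c *\<^sub>R g (\<gamma> ?q) (lam ?q)"
        unfolding \<gamma>_def by (rule key_eq[OF c wdef])
      finally show ?thesis .
    qed
    have dxs: "(xs has_vector_derivative c *\<^sub>R g (xs t) (z10 (t - 1))) (at t within {0..1})"
      if t: "t \<in> {0..1}" for t
    proof -
      have e1: "xs t = \<gamma> (\<psi>t t)" "z10 (t - 1) = lam (\<psi>t t)" using t by (auto simp: xs_def z10_def)
      show ?thesis unfolding e1
        by (rule has_vector_derivative_transform_within[OF has_vector_derivative_at_within[OF dxs0[OF t]], of 1])
           (use t in \<open>auto simp: xs_def\<close>)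
    qed
    have xsc: "continuous_on {-2..1} xs"
    proof -
      have "continuous_on {0..1} (\<lambda>t. \<gamma> (\<psi>t t))"
      proof (rule continuous_at_imp_continuous_on, rule ballI)
        fix t :: real assume "t \<in> {0..1}"
        then show "isCont (\<lambda>t. \<gamma> (\<psi>t t)) t"
          using dxs0 has_vector_derivative_continuous by blast
      qed
      then show ?thesis unfolding xs_def[abs_def]
        by (rule continuous_on_compose2[of _ "\<lambda>t. \<gamma> (\<psi>t t)"]) (auto intro!: continuous_intros)
    qed
    show "\<exists>(z10 :: real \<Rightarrow> real) (x0 :: real \<Rightarrow> real^2).
           continuous_on {-2..0} z10 \<and> (\<forall>t\<in>{-2..0}. \<bar>z10 t\<bar> \<le> 1) \<and> z10 0 = 0 \<and>
           continuous_on {-2..0} x0 \<and> (\<forall>t\<in>{-2..0}. norm (x0 t) \<le> 1) \<and>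
           (\<forall>z20 :: real \<Rightarrow> real. continuous_on {-2..0} z20 \<and> (\<forall>t\<in>{-2..-1}. z20 t = 1) \<longrightarrow>
              (\<exists>x z1 z2. is_solution c x0 z10 z20 x z1 z2) \<and>
              (\<forall>x z1 z2. is_solution c x0 z10 z20 x z1 z2 \<longrightarrow> norm (x 1) \<ge> 2 * M))"
    proof (rule exI[of _ z10], rule exI[of _ x0], intro conjI z10c z10_0 ballI allI impI)
      show "\<bar>z10 t\<bar> \<le> 1" for t using lam_range[of "\<psi>t (max 0 (t + 1))"] by (simp add: z10_def)
      show "continuous_on {-2..0} x0" by (simp add: x0_def)
      show "norm (x0 t) \<le> 1" for t
        using r0[of \<psi>s] s1 by (simp add: x0_def n\<gamma> \<psi>1_def)
    next
      fix z20 :: "real \<Rightarrow> real"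
      assume z20: "continuous_on {-2..0} z20 \<and> (\<forall>t\<in>{-2..-1}. z20 t = 1)"
      define Z1 where "Z1 t = (if t \<le> 0 then z10 t else 0)" for t
      define Z2 where "Z2 t = (if t \<le> 0 then z20 t else z20 0 * exp (- t))" for t
      have sub: "{x \<in> {-2..1}. x \<le> 0} \<subseteq> {-2..0::real}" by auto
      have c1: "continuous_on {-2..1} Z1" unfolding Z1_def[abs_def]
      proof (rule continuous_on_cases_le[where h="\<lambda>t. t" and a=0])
        show "continuous_on {x \<in> {-2..1}. x \<le> 0} z10" by (rule continuous_on_subset[OF z10c sub])
        show "continuous_on {x \<in> {-2..1}. 0 \<le> x} (\<lambda>x. 0)" by (rule continuous_on_const)
        show "continuous_on {-2..1} (\<lambda>t::real. t)" by (rule continuous_on_id)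
        show "z10 x = 0" if "x \<in> {-2..1}" "x = 0" for x using that z10_0 by simp
      qed
      have c2: "continuous_on {-2..1} Z2" unfolding Z2_def[abs_def]
      proof (rule continuous_on_cases_le[where h="\<lambda>t. t" and a=0])
        show "continuous_on {x \<in> {-2..1}. x \<le> 0} z20" using z20 by (intro continuous_on_subset[OF _ sub]) auto
        show "continuous_on {x \<in> {-2..1}. 0 \<le> x} (\<lambda>x. z20 0 * exp (- x))" by (intro continuous_intros)
        show "continuous_on {-2..1} (\<lambda>t::real. t)" by (rule continuous_on_id)
        show "z20 x = z20 0 * exp (- x)" if "x \<in> {-2..1}" "x = 0" for x using that by simp
      qed
      have ini: "xs t = x0 t \<and> Z1 t = z10 t \<and> Z2 t = z20 t" if "t \<in> {-2..0}" for t
        using that t0 by (auto simp: xs_def x0_def Z1_def Z2_def)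
      have der: "(xs has_vector_derivative
           ((c * sat (Z2 (t - 2))) *\<^sub>R g (xs t) (Z1 (t - 1))
            + (c * (1 - sat (Z2 (t - 2)))) *\<^sub>R (A0 *v xs t))) (at t within {0..1}) \<and>
        (Z1 has_vector_derivative (- Z1 t)) (at t within {0..1}) \<and>
        (Z2 has_vector_derivative (- Z2 t)) (at t within {0..1})" if t: "t \<in> {0..1}" for t
      proof (intro conjI)
        have "Z2 (t - 2) = 1" using z20 t by (auto simp: Z2_def)
        then have s1: "sat (Z2 (t - 2)) = 1" by (simp add: sat_def)
        have z1: "Z1 (t - 1) = z10 (t - 1)" using t by (simp add: Z1_def)
        show "(xs has_vector_derivative
           ((c * sat (Z2 (t - 2))) *\<^sub>R g (xs t) (Z1 (t - 1))
            + (c * (1 - sat (Z2 (t - 2)))) *\<^sub>R (A0 *v xs t))) (at t within {0..1})"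
          unfolding s1 z1 using dxs[OF t] by simp
        have zz: "Z1 t = 0" using t z10_0 by (auto simp: Z1_def)
        have "(Z1 has_vector_derivative 0) (at t within {0..1})"
        proof (rule has_vector_derivative_transform_within[OF has_vector_derivative_const[of 0 "at t within {0..1}"] zero_less_one t])
          show "0 = Z1 x'" if "x' \<in> {0..1}" "dist x' t < 1" for x' using that z10_0 by (auto simp: Z1_def)
        qed
        then show "(Z1 has_vector_derivative (- Z1 t)) (at t within {0..1})" using zz by simp
        have "((\<lambda>t. z20 0 * exp (- t)) has_vector_derivative (- Z2 t)) (at t within {0..1})"
        proof -
          have "((\<lambda>t. z20 0 * exp (- t)) has_real_derivative z20 0 * (exp (- t) * (- 1))) (at t within {0..1})"
            by (auto intro!: derivative_eq_intros)
          moreover have "z20 0 * (exp (- t) * (- 1)) = - Z2 t" using t by (auto simp: Z2_def)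
          ultimately show ?thesis by (simp add: has_real_derivative_iff_has_vector_derivative)
        qed
        then show "(Z2 has_vector_derivative (- Z2 t)) (at t within {0..1})"
          by (rule has_vector_derivative_transform_within[OF _ zero_less_one t]) (auto simp: Z2_def)
      qed
      show "\<exists>x z1 z2. is_solution c x0 z10 z20 x z1 z2"
        by (rule exI[of _ xs], rule exI[of _ Z1], rule exI[of _ Z2])
           (use xsc c1 c2 ini der in \<open>simp add: is_solution_def\<close>)
    next
      fix z20 :: "real \<Rightarrow> real" and x z1 z2
      assume z20: "continuous_on {-2..0} z20 \<and> (\<forall>t\<in>{-2..-1}. z20 t = 1)"
        and sol: "is_solution c x0 z10 z20 x z1 z2"
      have cx: "continuous_on {-2..1} x" and ix: "\<forall>t\<in>{-2..0}. x t = x0 t \<and> z1 t = z10 t \<and> z2 t = z20 t"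
        and dx: "\<forall>t\<in>{0..1}. (x has_vector_derivative
           ((c * sat (z2 (t - 2))) *\<^sub>R g (x t) (z1 (t - 1))
            + (c * (1 - sat (z2 (t - 2)))) *\<^sub>R (A0 *v x t))) (at t within {0..1})"
        using sol unfolding is_solution_def by blast+
      have dx': "(x has_vector_derivative c *\<^sub>R g (x t) (z10 (t - 1))) (at t within {0..1})" if t: "t \<in> {0..1}" for t
      proof -
        have "z2 (t - 2) = 1" using z20 ix t by auto
        then have s1: "sat (z2 (t - 2)) = 1" by (simp add: sat_def)
        have z1: "z1 (t - 1) = z10 (t - 1)" using ix t by auto
        have "(x has_vector_derivative
           ((c * sat (z2 (t - 2))) *\<^sub>R g (x t) (z1 (t - 1))
            + (c * (1 - sat (z2 (t - 2)))) *\<^sub>R (A0 *v x t))) (at t within {0..1})" using dx t by blast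
        then show ?thesis unfolding s1 z1 by simp
      qed
      have "x 1 = xs 1"
      proof (rule uniq[of x xs c "\<lambda>t. z10 (t - 1)"])
        show "continuous_on {0..1} x" by (rule continuous_on_subset[OF cx]) auto
        show "continuous_on {0..1} xs" by (rule continuous_on_subset[OF xsc]) auto
        show "(x has_vector_derivative c *\<^sub>R g (x t) (z10 (t - 1))) (at t within {0..1})" if "t \<in> {0..1}" for t
          by (rule dx'[OF that])
        show "(xs has_vector_derivative c *\<^sub>R g (xs t) (z10 (t - 1))) (at t within {0..1})" if "t \<in> {0..1}" for t
          by (rule dxs[OF that])
        show "x 0 = xs 0" using ix t0 by (auto simp: x0_def xs_def)
      qed
      also have "xs 1 = \<gamma> \<psi>E" using t1 by (simp add: xs_def)
      finally show "2 * M \<le> norm (x 1)" using bigE by (simp add: n\<gamma>)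
    qed
  qed
qed


end
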